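(* Let $m,n\in\mathbb{N}_0$ with $m>n$, and let \[ \mathcal{F}_{m,n}=\{p(x)+\ln(x)q(x):\ p\in\Pi_m,\ q\in\Pi_n\}, \] considered as functions on $(1,\infty)$. Then every nonzero $f\in\mathcal{F}_{m,n}$ has at most $m+n+1$ distinct zeros in $(1,\infty)$.
   Context: $\Pi_n$ denotes the space of real polynomials of degree at most $n$. *)

theory Defs
  imports "HOL-Analysis.Analysis" "HOL-Computational_Algebra.Polynomial"
begin

definition plog_fun :: "real poly \<Rightarrow> real poly \<Rightarrow> real \<Rightarrow> real" where
  "plog_fun p q x = poly p x + ln x * poly q x"

end

theory Submission
  imports Defs
begin

lemma mvt_zero:
  fixes f g :: "real \<Rightarrow> real"
  assumes der: "\<forall>x>1. (f has_real_derivative g x) (at x)"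
    and ab: "1 < a" "a < b"
  shows "\<exists>z. a < z \<and> z < b \<and> f b - f a = (b - a) * g z"
proof -
  have ic: "isCont f x" if "x \<in> {a..b}" for x
  proof -
    have "1 < x" using that ab by auto
    thus ?thesis using DERIV_isCont[OF der[rule_format, of x]] by blast
  qed
  have cont: "continuous_on {a..b} f"
    using ic by (intro continuous_at_imp_continuous_on) auto
  have dif: "\<And>x. a < x \<Longrightarrow> x < b \<Longrightarrow> f differentiable (at x)"
    using der ab unfolding real_differentiable_def by (meson less_trans)
  obtain l z where z: "a < z" "z < b" "DERIV f z :> l" "f b - f a = (b - a) * l"
    using MVT[OF ab(2) cont dif] by blast
  have z1: "1 < z" using z(1) ab(1) by linarith
  have "l = g z" using DERIV_unique[OF z(3) der[rule_format, OF z1]] .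
  thus ?thesis using z by auto
qed

lemma rolle_count:
  fixes f g :: "real \<Rightarrow> real"
  assumes der: "\<forall>x>1. (f has_real_derivative g x) (at x)"
    and nz: "\<exists>x>1. f x \<noteq> 0"
    and ih: "(\<exists>x>1. g x \<noteq> 0) \<Longrightarrow> finite {x. x > 1 \<and> g x = 0} \<and> card {x. x > 1 \<and> g x = 0} \<le> K"
  shows "finite {x. x > 1 \<and> f x = 0} \<and> card {x. x > 1 \<and> f x = 0} \<le> K + 1"
proof (cases "\<exists>x>1. g x \<noteq> 0")
  case False
  have const: "f a = f b" if "a > 1" "b > 1" for a b
  proof -
    have "f a = f b" if h: "1 < a" "a < b" for a b
    proof -
      obtain z where z: "a < z" "z < b" "f b - f a = (b - a) * g z"
        using mvt_zero[OF der h] by blast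
      have "g z = 0" using False z(1) h(1) by auto
      thus ?thesis using z(3) by simp
    qed
    thus ?thesis using that by (cases a b rule: linorder_cases) auto
  qed
  obtain x0 where x0: "x0 > 1" "f x0 \<noteq> 0" using nz by auto
  have nz': "f x \<noteq> 0" if "x > 1" for x using const[OF that x0(1)] x0(2) by simp
  have e: "{x. x > 1 \<and> f x = 0} = {}" using nz' by blast
  show ?thesis unfolding e by simp
next
  case True
  define Zg where "Zg = {x. x > 1 \<and> g x = 0}"
  define Zf where "Zf = {x. x > 1 \<and> f x = 0}"
  have fin: "finite Zg" and cg: "card Zg \<le> K" using ih[OF True] Zg_def by auto
  have key: "S \<subseteq> Zf \<longrightarrow> (\<exists>T. T \<subseteq> Zg \<and> card S \<le> card T + 1 \<and> (\<forall>t\<in>T. \<exists>s\<in>S. t < s))"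
    if "finite S" for S
    using that
  proof (induction S rule: finite_linorder_max_induct)
    case empty
    then show ?case by auto
  next
    case (insert b A)
    show ?case
    proof
      assume sub: "insert b A \<subseteq> Zf"
      show "\<exists>T. T \<subseteq> Zg \<and> card (insert b A) \<le> card T + 1 \<and> (\<forall>t\<in>T. \<exists>s\<in>insert b A. t < s)"
      proof (cases "A = {}")
        case True
        then show ?thesis by (intro exI[of _ "{}"]) auto
      next
        case False
        define a where "a = Max A"
        have aA: "a \<in> A" using False insert(1) a_def by auto
        have ab: "a < b" using aA insert(2) by auto
        have a1: "1 < a" using sub aA Zf_def by auto
        obtain T where T: "T \<subseteq> Zg" "card A \<le> card T + 1" "\<forall>t\<in>T. \<exists>s\<in>A. t < s"
          using insert(3) sub by auto
        obtain z where z: "a < z" "z < b" "f b - f a = (b - a) * g z"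
          using mvt_zero[OF der a1 ab] by blast
        have "f b = 0" "f a = 0" using sub aA Zf_def by auto
        hence gz: "g z = 0" using z ab by simp
        have zT: "z \<notin> T"
        proof
          assume "z \<in> T"
          then obtain s where "s \<in> A" "z < s" using T by auto
          hence "s \<le> a" using a_def insert(1) by auto
          thus False using \<open>z < s\<close> z by auto
        qed
        have finT: "finite T" using T(1) fin finite_subset by blast
        have "insert z T \<subseteq> Zg" using T gz z a1 Zg_def by auto
        moreover have "card (insert b A) \<le> card (insert z T) + 1"
          using T(2) zT finT insert(1,2) proof -
            have "b \<notin> A" using insert(2) by auto
            thus ?thesis using T(2) zT finT insert(1) by simp
          qed
        moreover have "\<forall>t\<in>insert z T. \<exists>s\<in>insert b A. t < s" using T(3) z by auto
        ultimately show ?thesis by blast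
      qed
    qed
  qed
  have bound: "card S \<le> K + 1" if hS: "finite S" "S \<subseteq> Zf" for S
  proof -
    obtain T where "T \<subseteq> Zg" "card S \<le> card T + 1" using key[OF hS(1)] hS(2) by auto
    moreover have "card T \<le> card Zg" using calculation(1) fin card_mono by auto
    ultimately show ?thesis using cg by linarith
  qed
  have "finite Zf"
  proof (rule ccontr)
    assume "\<not> finite Zf"
    then obtain B where "finite B" "card B = K + 2" "B \<subseteq> Zf"
      using infinite_arbitrarily_large by blast
    thus False using bound[of B] by simp
  qed
  moreover have "card Zf \<le> K + 1" using bound[OF calculation] by simp
  ultimately show ?thesis unfolding Zf_def by blast
qed



definition Dp :: "real poly \<Rightarrow> real poly \<Rightarrow> real poly" where
  "Dp p q = pCons 0 (pderiv p) + q"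
definition Dq :: "real poly \<Rightarrow> real poly" where
  "Dq q = pCons 0 (pderiv q)"

lemma plog_deriv:
  assumes "x > 0"
  shows "(plog_fun p q has_real_derivative plog_fun (Dp p q) (Dq q) x / x) (at x)"
proof -
  have "((\<lambda>x. poly p x + ln x * poly q x) has_real_derivative
      poly (pderiv p) x + (inverse x * poly q x + ln x * poly (pderiv q) x)) (at x)"
  proof -
    have l: "(ln has_real_derivative inverse x) (at x)" using assms DERIV_ln by auto
    have "((\<lambda>x. ln x * poly q x) has_real_derivative
        inverse x * poly q x + ln x * poly (pderiv q) x) (at x)"
      using DERIV_mult[OF l poly_DERIV[of q x]] by (simp add: algebra_simps)
    thus ?thesis using DERIV_add[OF poly_DERIV[of p x]] by blast
  qed
  moreover have "poly (pderiv p) x + (inverse x * poly q x + ln x * poly (pderiv q) x)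
      = plog_fun (Dp p q) (Dq q) x / x"
    using assms by (simp add: plog_fun_def Dp_def Dq_def field_simps)
  ultimately show ?thesis unfolding plog_fun_def[abs_def] by simp
qed

lemma degree_pCons0_pderiv: "degree (pCons 0 (pderiv p)) \<le> degree (p :: real poly)"
proof (cases "pderiv p = 0")
  case True then show ?thesis by simp
next
  case False
  hence "degree p \<noteq> 0" using pderiv_eq_0_iff by auto
  thus ?thesis using False by (simp add: degree_pderiv)
qed

lemma zeros_div:
  "{x. x > 1 \<and> (f x :: real) / x = 0} = {x. x > 1 \<and> f x = 0}"
  by auto

lemma main_gen:
  fixes m n :: nat and p q :: "real poly"
  assumes "n \<le> m"
    and "degree p \<le> m" and "degree q \<le> n"
    and "\<exists>x>1. plog_fun p q x \<noteq> 0"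
  shows "finite {x. x > 1 \<and> plog_fun p q x = 0}
         \<and> card {x. x > 1 \<and> plog_fun p q x = 0} \<le> m + n + 1"
  using assms
proof (induction n arbitrary: m p q)
  case 0
  define P where "P = Dp p q"
  have qd: "pderiv q = 0" using 0 pderiv_eq_0_iff by auto
  have gz: "plog_fun (Dp p q) (Dq q) x = poly P x" for x
    by (simp add: P_def Dq_def qd plog_fun_def)
  have "finite {x. x > 1 \<and> plog_fun p q x = 0} \<and> card {x. x > 1 \<and> plog_fun p q x = 0} \<le> m + 1"
  proof (rule rolle_count[where g = "\<lambda>x. plog_fun (Dp p q) (Dq q) x / x"])
    show "\<forall>x>1. (plog_fun p q has_real_derivative plog_fun (Dp p q) (Dq q) x / x) (at x)"
      using plog_deriv by auto
    show "\<exists>x>1. plog_fun p q x \<noteq> 0" using 0 by auto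
    assume "\<exists>x>1. plog_fun (Dp p q) (Dq q) x / x \<noteq> 0"
    hence Pnz: "P \<noteq> 0" using gz by auto
    have sub: "{x. x > 1 \<and> plog_fun (Dp p q) (Dq q) x / x = 0} \<subseteq> {x. poly P x = 0}"
      using gz by auto
    have "degree P \<le> m" unfolding P_def Dp_def
      using degree_add_le_max[of "pCons 0 (pderiv p)" q] degree_pCons0_pderiv[of p] 0 by linarith
    moreover have "card {x. x > 1 \<and> plog_fun (Dp p q) (Dq q) x / x = 0} \<le> card {x. poly P x = 0}"
      using sub poly_roots_finite[OF Pnz] card_mono by blast
    ultimately have cb: "card {x. x > 1 \<and> plog_fun (Dp p q) (Dq q) x / x = 0} \<le> m"
      using card_poly_roots_bound[OF Pnz] by linarith
    have "finite {x. x > 1 \<and> plog_fun (Dp p q) (Dq q) x / x = 0}"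
      by (rule finite_subset[OF sub poly_roots_finite[OF Pnz]])
    with cb show "finite {x. x > 1 \<and> plog_fun (Dp p q) (Dq q) x / x = 0}
       \<and> card {x. x > 1 \<and> plog_fun (Dp p q) (Dq q) x / x = 0} \<le> m" by blast
  qed
  thus ?case by simp
next
  case (Suc k)
  obtain m' where m': "m = Suc m'" using Suc.prems(1) by (cases m) auto
  define P1 where "P1 = Dp p q"
  define Q1 where "Q1 = Dq q"
  define pt where "pt = pderiv P1 + pderiv q"
  define qt where "qt = pderiv Q1"
  have ident: "plog_fun (Dp P1 Q1) (Dq Q1) x = x * plog_fun pt qt x" for x
    by (simp add: plog_fun_def Dp_def Dq_def pt_def qt_def Q1_def algebra_simps)
  have dP1: "degree P1 \<le> m" unfolding P1_def Dp_def
    using degree_add_le_max[of "pCons 0 (pderiv p)" q] degree_pCons0_pderiv[of p] Suc.prems(1,2,3) by linarith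
  have dQ1: "degree Q1 \<le> Suc k" unfolding Q1_def Dq_def
    using degree_pCons0_pderiv[of q] Suc.prems(3) by linarith
  have dpt: "degree pt \<le> m'" unfolding pt_def
    using degree_add_le_max[of "pderiv P1" "pderiv q"] dP1 Suc.prems(3) m' Suc.prems(1)
    by (simp add: degree_pderiv)
  have dqt: "degree qt \<le> k" unfolding qt_def using dQ1 by (simp add: degree_pderiv)
  have step1: "finite {x. x > 1 \<and> plog_fun P1 Q1 x = 0} \<and> card {x. x > 1 \<and> plog_fun P1 Q1 x = 0} \<le> m + k + 1"
    if nz1: "\<exists>x>1. plog_fun P1 Q1 x \<noteq> 0"
  proof (rule rolle_count[where g = "\<lambda>x. plog_fun (Dp P1 Q1) (Dq Q1) x / x"])
    show "\<forall>x>1. (plog_fun P1 Q1 has_real_derivative plog_fun (Dp P1 Q1) (Dq Q1) x / x) (at x)"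
      using plog_deriv by auto
    show "\<exists>x>1. plog_fun P1 Q1 x \<noteq> 0" by fact
    assume "\<exists>x>1. plog_fun (Dp P1 Q1) (Dq Q1) x / x \<noteq> 0"
    hence nzt: "\<exists>x>1. plog_fun pt qt x \<noteq> 0" using ident by auto
    have eq: "{x. x > 1 \<and> plog_fun (Dp P1 Q1) (Dq Q1) x / x = 0} = {x. x > 1 \<and> plog_fun pt qt x = 0}"
      using ident by auto
    have e: "m' + k + 1 = m + k" using m' by simp
    have "k \<le> m'" using Suc.prems(1) m' by simp
    from Suc.IH[OF this dpt dqt nzt] show "finite {x. x > 1 \<and> plog_fun (Dp P1 Q1) (Dq Q1) x / x = 0}
       \<and> card {x. x > 1 \<and> plog_fun (Dp P1 Q1) (Dq Q1) x / x = 0} \<le> m + k"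
      unfolding eq e[symmetric] .
  qed
  have "finite {x. x > 1 \<and> plog_fun p q x = 0} \<and> card {x. x > 1 \<and> plog_fun p q x = 0} \<le> m + k + 1 + 1"
  proof (rule rolle_count[where g = "\<lambda>x. plog_fun P1 Q1 x / x"])
    show "\<forall>x>1. (plog_fun p q has_real_derivative plog_fun P1 Q1 x / x) (at x)"
      using plog_deriv P1_def Q1_def by auto
    show "\<exists>x>1. plog_fun p q x \<noteq> 0" using Suc.prems(4) .
    assume "\<exists>x>1. plog_fun P1 Q1 x / x \<noteq> 0"
    hence "\<exists>x>1. plog_fun P1 Q1 x \<noteq> 0" by auto
    from step1[OF this] show "finite {x. x > 1 \<and> plog_fun P1 Q1 x / x = 0}
       \<and> card {x. x > 1 \<and> plog_fun P1 Q1 x / x = 0} \<le> m + k + 1"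
      unfolding zeros_div .
  qed
  moreover have "m + k + 1 + 1 = m + Suc k + 1" by simp
  ultimately show ?case by metis
qed

theorem mainTheorem10:
  fixes m n :: nat and p q :: "real poly"
  assumes "m > n"
    and "degree p \<le> m" and "degree q \<le> n"
    and "\<exists>x>1. plog_fun p q x \<noteq> 0"
  shows "finite {x. x > 1 \<and> plog_fun p q x = 0}
         \<and> card {x. x > 1 \<and> plog_fun p q x = 0} \<le> m + n + 1"
  using main_gen[of n m p q] assms(2-4) less_imp_le[OF assms(1)] by blast

end
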